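(* There is a set $A\subseteq\mathbb{Z}$ such that (i) for every $n\in\mathbb{Z}$, $n\in A$ or $n+1\in A$ (or both), and (ii) $A\times A$ contains an infinite empty polygon, i.e., there is an infinite set $T\subseteq A\times A$ such that every point of $T$ is a vertex (extreme point) of $\mathrm{conv}(T)$ and $\mathrm{conv}(T)\cap(A\times A)=T$. *)

theory Defs
  imports "HOL-Analysis.Analysis"
begin

definition grid :: "int set \<Rightarrow> (real \<times> real) set" where
  "grid A = {(real_of_int a, real_of_int b) | a b. a \<in> A \<and> b \<in> A}"

end

theory Submission
  imports Defs
begin

definition phi :: real where "phi = (1 + sqrt 5) / 2"

lemma phi_sq: "phi * phi = phi + 1"
proof -
  have "sqrt 5 * sqrt 5 = 5" by simp
  then show ?thesis unfolding phi_def by (simp add: field_simps algebra_simps)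
qed

lemma phi_bounds: "1.6 < phi" "phi < 1.7"
proof -
  have a: "2.2 < sqrt 5" by (rule real_less_rsqrt) (simp add: power2_eq_square)
  have b: "sqrt 5 < 2.4" by (rule real_less_lsqrt) (simp_all add: power2_eq_square)
  show "1.6 < phi" "phi < 1.7" using a b unfolding phi_def by auto
qed

fun pt :: "nat \<Rightarrow> int \<times> int" where
  "pt 0 = (2, 3)"
| "pt (Suc n) = (fst (pt n) + snd (pt n), fst (pt n) + 2 * snd (pt n))"

lemma norm_step: "(x + 2*y)^2 - (x + y) * (x + 2*y) - (x + y)^2 = y^2 - x*y - (x::int)^2"
  by (simp add: power2_eq_square algebra_simps)

lemma pt_norm: "snd (pt n)^2 - fst (pt n) * snd (pt n) - fst (pt n)^2 = -1"
proof (induction n)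
  case 0 then show ?case by simp
next
  case (Suc n)
  then show ?case by (simp only: pt.simps fst_conv snd_conv norm_step)
qed

lemma pt_ge: "2 \<le> fst (pt n) \<and> fst (pt n) \<le> snd (pt n)"
  by (induction n) auto

lemma pt_step: "fst (pt n) < fst (pt (Suc n)) \<and> snd (pt n) < snd (pt (Suc n))"
  using pt_ge[of n] by simp

lemma pt_mono: "m < n \<Longrightarrow> fst (pt m) < fst (pt n) \<and> snd (pt m) < snd (pt n)"
proof (induction n)
  case 0 then show ?case by simp
next
  case (Suc n)
  show ?case
  proof (cases "m = n")
    case True then show ?thesis using pt_step[of n] by simp
  next
    case False
    then have "m < n" using Suc.prems by simp
    then have "fst (pt m) < fst (pt n) \<and> snd (pt m) < snd (pt n)" by (rule Suc.IH)
    then show ?thesis using pt_step[of n] by linarith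
  qed
qed

definition rp :: "nat \<Rightarrow> real \<times> real" where
  "rp n = (real_of_int (fst (pt n)), real_of_int (snd (pt n)))"

definition e :: "real \<times> real \<Rightarrow> real" where "e z = phi * fst z - snd z"
definition D :: "real \<times> real \<Rightarrow> real" where "D z = snd z + (phi - 1) * fst z"

lemma eD: "e (rp n) * D (rp n) = 1"
proof -
  define x where "x = real_of_int (fst (pt n))"
  define y where "y = real_of_int (snd (pt n))"
  have N: "y^2 - x*y - x^2 = -1" unfolding x_def y_def using pt_norm[of n]
    by (metis (mono_tags) of_int_diff of_int_minus of_int_mult of_int_power of_int_1 of_int_eq_iff)
  have "e (rp n) * D (rp n) = (phi * x - y) * (y + (phi - 1) * x)"
    by (simp add: e_def D_def rp_def x_def y_def)
  also have "\<dots> = - (y^2 - x*y - x^2) + (phi*phi - phi - 1) * x^2"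
    by (simp add: algebra_simps power2_eq_square)
  also have "\<dots> = 1" using N phi_sq by simp
  finally show ?thesis .
qed

lemma D_ge: "D (rp n) \<ge> 3"
proof -
  have "2 \<le> real_of_int (fst (pt n))" "real_of_int (fst (pt n)) \<le> real_of_int (snd (pt n))"
    using pt_ge[of n] by auto
  moreover have "(phi - 1) * real_of_int (fst (pt n)) \<ge> (phi - 1) * 2"
    using phi_bounds calculation by (intro mult_left_mono) auto
  ultimately show ?thesis unfolding D_def rp_def using phi_bounds by simp
qed

lemma e_bounds: "0 < e (rp n)" "e (rp n) \<le> 1/3"
proof -
  have d: "D (rp n) \<ge> 3" by (rule D_ge)
  have m: "e (rp n) * D (rp n) = 1" by (rule eD)
  show p: "0 < e (rp n)" using d m by (metis zero_less_mult_iff zero_less_one not_numeral_le_zero linorder_not_less order_trans less_imp_le)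
  have "3 * e (rp n) \<le> D (rp n) * e (rp n)" using d p by (simp add: mult_right_mono)
  then show "e (rp n) \<le> 1/3" using m by (simp add: mult.commute)
qed

lemma D_mono: "m < n \<Longrightarrow> D (rp m) < D (rp n)"
proof -
  assume "m < n"
  then have "real_of_int (fst (pt m)) < real_of_int (fst (pt n))"
     "real_of_int (snd (pt m)) < real_of_int (snd (pt n))" using pt_mono by auto
  moreover have "(phi - 1) * real_of_int (fst (pt m)) < (phi - 1) * real_of_int (fst (pt n))"
    using phi_bounds calculation by (intro mult_strict_left_mono) auto
  ultimately show ?thesis unfolding D_def rp_def by simp
qed

lemma e_mono: "m < n \<Longrightarrow> e (rp n) < e (rp m)"
proof -
  assume mn: "m < n"
  have "e (rp n) = 1 / D (rp n)" "e (rp m) = 1 / D (rp m)"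
    using eD D_ge by (auto simp: field_simps) (metis D_ge eD nonzero_mult_div_cancel_right not_numeral_le_zero div_by_1)+
  then show ?thesis using D_mono[OF mn] D_ge[of m] by (simp add: frac_less2)
qed

definition Nf :: "real \<times> real \<Rightarrow> real" where "Nf z = snd z ^ 2 - fst z * snd z - fst z ^ 2"

lemma Nf_factor: "Nf z = - (e z * D z)"
proof -
  have "Nf z = - (e z * D z) + (phi * phi - phi - 1) * fst z ^ 2"
    by (simp add: Nf_def e_def D_def algebra_simps power2_eq_square)
  then show ?thesis using phi_sq by simp
qed

lemma Nf_rp: "Nf (rp n) = -1" using Nf_factor eD by simp

lemma Nf_diff_pos: assumes "m < n" shows "Nf (rp n - rp m) > 0"
proof -
  have eq: "e (rp n - rp m) = e (rp n) - e (rp m)" "D (rp n - rp m) = D (rp n) - D (rp m)"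
    by (auto simp: e_def D_def algebra_simps)
  have "e (rp n) - e (rp m) < 0" using e_mono[OF assms] by simp
  moreover have "D (rp n) - D (rp m) > 0" using D_mono[OF assms] by simp
  ultimately show ?thesis using Nf_factor[of "rp n - rp m"] eq by (simp add: mult_neg_pos)
qed

lemma Nf_neg: "Nf (- z) = Nf z" by (simp add: Nf_def)

lemma Nf_diff_pos2: assumes "m \<noteq> n" shows "Nf (rp n - rp m) > 0"
proof (cases "m < n")
  case True then show ?thesis by (rule Nf_diff_pos)
next
  case False
  then have "n < m" using assms by simp
  from Nf_diff_pos[OF this] show ?thesis using Nf_neg[of "rp m - rp n"] by simp
qed

definition cv :: "real \<times> real \<Rightarrow> real \<times> real" where
  "cv p = (- fst p - snd p / 2, snd p - fst p / 2)"

lemma cv_id: "cv p \<bullet> q = (Nf q + Nf p - Nf (q - p)) / 2"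
  by (cases p; cases q) (simp add: cv_def Nf_def inner_Pair algebra_simps power2_eq_square field_simps)

lemma rp_inj: "rp m = rp n \<Longrightarrow> m = n"
  using pt_mono[of m n] pt_mono[of n m] by (cases m n rule: linorder_cases) (auto simp: rp_def)

lemma int_phi: fixes k :: int shows "k = 0 \<or> phi * k \<ge> phi \<or> phi * k \<le> - phi"
proof -
  have "k = 0 \<or> k \<ge> 1 \<or> k \<le> -1" by linarith
  then show ?thesis
  proof (elim disjE)
    assume "k \<ge> 1" then have "real_of_int k \<ge> 1" by simp
    then have "phi * real_of_int k \<ge> phi * 1" using phi_bounds by (intro mult_left_mono) auto
    then show ?thesis by simp
  next
    assume "k \<le> -1" then have "real_of_int k \<le> -1" by simp
    then have "phi * real_of_int k \<le> phi * (-1)" using phi_bounds by (intro mult_left_mono) auto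
    then show ?thesis by simp
  qed simp
qed

lemma strict_support_extreme:
  fixes p :: "'a::real_inner"
  assumes pS: "p \<in> S" and st: "\<And>q. q \<in> S \<Longrightarrow> q \<noteq> p \<Longrightarrow> c \<bullet> q < c \<bullet> p"
  shows "p extreme_point_of convex hull S"
proof -
  define C where "C = {x. c \<bullet> x < c \<bullet> p} \<union> {p}"
  have memC: "x \<in> C \<longleftrightarrow> x = p \<or> c \<bullet> x < c \<bullet> p" for x by (auto simp: C_def)
  have cC: "convex C"
    unfolding convex_def
  proof (intro ballI allI impI)
    fix x y and u v :: real
    assume x: "x \<in> C" and y: "y \<in> C" and u: "0 \<le> u" and v: "0 \<le> v" and uv: "u + v = 1"
    have ix: "c \<bullet> x \<le> c \<bullet> p" "c \<bullet> y \<le> c \<bullet> p" using x y memC by fastforce+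
    have lin: "c \<bullet> (u *\<^sub>R x + v *\<^sub>R y) = u * (c \<bullet> x) + v * (c \<bullet> y)"
      by (simp add: inner_add_right)
    have cp: "u * (c \<bullet> p) + v * (c \<bullet> p) = c \<bullet> p" using uv by (metis distrib_right mult_1)
    show "u *\<^sub>R x + v *\<^sub>R y \<in> C"
    proof (cases "u = 0")
      case True then have "v = 1" using uv by simp
      then show ?thesis using True y by simp
    next
      case u0: False
      show ?thesis
      proof (cases "v = 0")
        case True then have "u = 1" using uv by simp
        then show ?thesis using True x by simp
      next
        case v0: False
        have u': "u > 0" using u u0 by simp
        have v': "v > 0" using v v0 by simp
        show ?thesis
        proof (cases "x = p \<and> y = p")
          case True
          then have "u *\<^sub>R x + v *\<^sub>R y = (u + v) *\<^sub>R p" by (simp add: scaleR_add_left)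
          then show ?thesis using uv memC by simp
        next
          case False
          then have "c \<bullet> x < c \<bullet> p \<or> c \<bullet> y < c \<bullet> p" using x y memC by blast
          then have "u * (c \<bullet> x) + v * (c \<bullet> y) < u * (c \<bullet> p) + v * (c \<bullet> p)"
          proof
            assume h: "c \<bullet> x < c \<bullet> p"
            have "u * (c \<bullet> x) < u * (c \<bullet> p)" using h u' by simp
            moreover have "v * (c \<bullet> y) \<le> v * (c \<bullet> p)" using ix v' by (simp add: mult_left_mono)
            ultimately show ?thesis by linarith
          next
            assume h: "c \<bullet> y < c \<bullet> p"
            have "v * (c \<bullet> y) < v * (c \<bullet> p)" using h v' by simp
            moreover have "u * (c \<bullet> x) \<le> u * (c \<bullet> p)" using ix u' by (simp add: mult_left_mono)
            ultimately show ?thesis by linarith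
          qed
          then have "c \<bullet> (u *\<^sub>R x + v *\<^sub>R y) < c \<bullet> p" using lin cp by linarith
          then show ?thesis using memC by blast
        qed
      qed
    qed
  qed
  have "S \<subseteq> C" using st memC by blast
  then have sub: "convex hull S \<subseteq> C" using cC by (simp add: hull_minimal)
  have pH: "p \<in> convex hull S" using pS hull_subset[of S convex] by blast
  show ?thesis
  proof (rule extreme_point_of_Int_supporting_hyperplane_le[where a = c and b = "c \<bullet> p"])
    show "convex hull S \<inter> {x. c \<bullet> x = c \<bullet> p} = {p}"
    proof
      show "{p} \<subseteq> convex hull S \<inter> {x. c \<bullet> x = c \<bullet> p}" using pH by blast
      show "convex hull S \<inter> {x. c \<bullet> x = c \<bullet> p} \<subseteq> {p}"
      proof
        fix z assume "z \<in> convex hull S \<inter> {x. c \<bullet> x = c \<bullet> p}"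
        then have "z \<in> C" "c \<bullet> z = c \<bullet> p" using sub by auto
        then show "z \<in> {p}" using memC by auto
      qed
    qed
    fix x assume "x \<in> convex hull S"
    then have "x \<in> C" using sub by blast
    then show "c \<bullet> x \<le> c \<bullet> p" using memC by fastforce
  qed
qed

theorem proposition9:
  shows "\<exists>A :: int set. (\<forall>n. n \<in> A \<or> n + 1 \<in> A) \<and>
     (\<exists>T. T \<subseteq> grid A \<and> infinite T \<and>
          (\<forall>x\<in>T. x extreme_point_of (convex hull T)) \<and>
          convex hull T \<inter> grid A = T)"
proof -
  define T where "T = range rp"
  define R where "R = {z. 0 \<le> e z \<and> e z \<le> 1/3}"
  define B where "B = {b::int. \<exists>a::int. (of_int a, of_int b) \<in> R \<and> (of_int a, of_int b) \<notin> T}"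
  define A where "A = - B"
  have TR: "T \<subseteq> R" using e_bounds by (auto simp: T_def R_def intro: less_imp_le)
  have Req: "R = {z. (phi, -1) \<bullet> z \<ge> 0} \<inter> {z. (phi, -1) \<bullet> z \<le> 1/3}"
    by (auto simp: R_def e_def inner_Pair)
  have cR: "convex R" unfolding Req by (intro convex_Int convex_halfspace_ge convex_halfspace_le)
  have hR: "convex hull T \<subseteq> R" using TR cR by (simp add: hull_minimal)
  have i: "\<forall>n. n \<in> A \<or> n + 1 \<in> A"
  proof (rule ccontr)
    assume "\<not> ?thesis"
    then obtain n where "n \<in> B" "n + 1 \<in> B" by (auto simp: A_def)
    then obtain a a' :: int where a: "(of_int a, of_int n) \<in> R" and a': "(of_int a', of_int (n+1)) \<in> R"
      by (auto simp: B_def)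
    have "phi * of_int (a - a') = e (of_int a, of_int n) - e (of_int a', of_int (n+1)) - 1"
      by (simp add: e_def algebra_simps)
    then have "phi * of_int (a - a') \<ge> -4/3" "phi * of_int (a - a') \<le> -2/3" using a a' by (auto simp: R_def)
    moreover have "a - a' = 0 \<Longrightarrow> False" using calculation by simp
    ultimately show False using int_phi[of "a - a'"] phi_bounds by linarith
  qed
  have Tg: "T \<subseteq> grid A"
  proof
    fix z assume "z \<in> T"
    then obtain n where z: "z = rp n" by (auto simp: T_def)
    define x where "x = fst (pt n)"
    define y where "y = snd (pt n)"
    have zxy: "z = (of_int x, of_int y)" by (simp add: z rp_def x_def y_def)
    have ez: "0 < e z" "e z \<le> 1/3" using e_bounds z by auto
    have "y \<notin> B"
    proof
      assume "y \<in> B"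
      then obtain a where a: "(of_int a, of_int y) \<in> R" "(of_int a, of_int y) \<notin> T" by (auto simp: B_def)
      have "phi * of_int (a - x) = e (of_int a, of_int y) - e z" by (simp add: zxy e_def algebra_simps)
      then have "phi * of_int (a - x) \<ge> -1/3" "phi * of_int (a - x) \<le> 1/3" using a ez by (auto simp: R_def)
      then have "a - x = 0" using int_phi[of "a - x"] phi_bounds by linarith
      then have "a = x" by simp
      then show False using a \<open>z \<in> T\<close> zxy by simp
    qed
    moreover have "x \<notin> B"
    proof
      assume "x \<in> B"
      then obtain a where a: "(of_int a, of_int x) \<in> R" by (auto simp: B_def)
      define k where "k = a - (y - x)"
      have "e (of_int a, of_int x) = phi * of_int k + (phi * of_int y - (phi + 1) * of_int x)"
        by (simp add: e_def k_def algebra_simps)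
      also have "phi * of_int y - (phi + 1) * of_int x = - phi * e z"
      proof -
        have "(phi + 1) * of_int x = (phi * phi) * of_int x" using phi_sq by simp
        then show ?thesis by (simp add: zxy e_def algebra_simps)
      qed
      finally have eq: "e (of_int a, of_int x) = phi * (of_int k - e z)" by (simp add: algebra_simps)
      have "k \<le> 0 \<or> k \<ge> 1" by linarith
      then show False
      proof
        assume "k \<le> 0"
        then have "of_int k - e z < 0" using ez by simp
        then have "phi * (of_int k - e z) < 0" using phi_bounds by (simp add: mult_pos_neg)
        then show False using a eq by (simp add: R_def)
      next
        assume "k \<ge> 1"
        then have "of_int k - e z \<ge> 2/3" using ez by simp
        then have "phi * (of_int k - e z) \<ge> phi * (2/3)" using phi_bounds by (simp add: mult_left_mono)
        moreover have "e (of_int a, of_int x) \<le> 1/3" using a by (simp add: R_def)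
        ultimately show False using eq phi_bounds by linarith
      qed
    qed
    ultimately show "z \<in> grid A" by (auto simp: grid_def A_def zxy)
  qed
  have inf: "infinite T" unfolding T_def
    using rp_inj by (metis injI range_inj_infinite)
  have ext: "\<forall>x\<in>T. x extreme_point_of (convex hull T)"
  proof
    fix p assume "p \<in> T"
    then obtain n where p: "p = rp n" by (auto simp: T_def)
    show "p extreme_point_of (convex hull T)"
    proof (rule strict_support_extreme[where c = "cv p"])
      show "p \<in> T" by fact
      fix q assume "q \<in> T" "q \<noteq> p"
      then obtain m where q: "q = rp m" and "m \<noteq> n" using p by (auto simp: T_def)
      have "Nf (q - p) > 0" using Nf_diff_pos2[of n m] \<open>m \<noteq> n\<close> p q by simp
      moreover have "Nf (p - p) = 0" by (simp add: Nf_def)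
      moreover have "Nf p = -1" "Nf q = -1" using Nf_rp p q by auto
      ultimately have "cv p \<bullet> q = (-2 - Nf (q - p)) / 2" "cv p \<bullet> p = -1" "Nf (q - p) > 0"
        using cv_id[of p q] cv_id[of p p] by simp_all
      then show "cv p \<bullet> q < cv p \<bullet> p" by simp
    qed
  qed
  have eqT: "convex hull T \<inter> grid A = T"
  proof
    show "T \<subseteq> convex hull T \<inter> grid A" using Tg hull_subset[of T convex] by auto
    show "convex hull T \<inter> grid A \<subseteq> T"
    proof
      fix z assume z: "z \<in> convex hull T \<inter> grid A"
      then obtain a b where zab: "z = (of_int a, of_int b)" "b \<in> A" by (auto simp: grid_def)
      then have "b \<notin> B" by (simp add: A_def)
      moreover have "z \<in> R" using z hR by auto
      ultimately show "z \<in> T" using zab by (auto simp: B_def)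
    qed
  qed
  show ?thesis using i Tg inf ext eqT by blast
qed

end
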